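(* Let $G$ be a trigraph containing a fence gadget $F$ attached to a set $S$ and satisfying the attachment rule in $G$ with set $X$, and let $Y=V(G)\setminus(V(F)\cup S\cup X)$. Let $G'$ be any trigraph of a partial $4$-sequence from $G$ such that $S$ is not contained in a single part of $G'$. Then (i) no part of $G'$ intersects both $S$ and $V(G)\setminus S$, and (ii) no part of $G'$ intersects both $X$ and $Y$.
   Context: A trigraph $G$ consists of a vertex set $V(G)$ and two disjoint sets of unordered pairs of distinct vertices: black edges and red edges; the red graph is formed by the red edges. Contracting two distinct vertices $u,v$ replaces them by a new vertex $w$ such that, for every other vertex $z$, $wz$ is black if $uz,vz$ are both black, a non-edge if both are non-edges, and red otherwise. A partial $d$-sequence from $G$ is a sequence of trigraphs starting at $G$, each obtained from the previous by one contraction, all of maximum red degree at most $d$. Each vertex $u$ of a later trigraph $G'$ corresponds to the set $u(G)$ of vertices of $G$ merged into it; these sets are the parts of $G'$. A fence gadget is a trigraph $F$ on $A\cup B$, $A=\{a_1,\dots,a_6\}$, $B=\{b_1,\dots,b_6\}$, whose black edges are those of the cycles $a_1a_2a_3a_4a_5a_6a_1$ and $b_1b_2b_3b_4b_5b_6b_1$ together with $b_1a_6$, and whose red edges are $a_ib_i$ for $i\in[6]$ and $a_ib_{i+1}$ for $i\in[5]$. Inside a trigraph $G$, $F$ is attached to a nonempty set $S\subseteq V(G)\setminus V(F)$ if every vertex of $A$ is joined by a black edge to every vertex of $S$ and no vertex of $B$ is adjacent to a vertex of $S$. $F$ satisfies the attachment rule in $G$ if $V(F)$ is the vertex set of a connected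 component of the red graph of $G$ and there is a set $X\subseteq V(G)\setminus(V(F)\cup S)$ such that every vertex of $A$ has exactly $X\cup S$ as its set of neighbours outside $V(F)$, every vertex of $B$ has exactly $X$ as its set of neighbours outside $V(F)$ (all these edges black), and every vertex of $X$ is adjacent to every vertex of $S$. *)

theory Defs
  imports Main
begin

record 'v trigraph =
  verts :: "'v set"
  blk   :: "'v set set"
  red   :: "'v set set"

definition pairs_on :: "'v set \<Rightarrow> 'v set set" where
  "pairs_on V = {{x, y} | x y. x \<in> V \<and> y \<in> V \<and> x \<noteq> y}"

definition wf_trigraph :: "('v, 'b) trigraph_scheme \<Rightarrow> bool" where
  "wf_trigraph G \<longleftrightarrow> finite (verts G) \<and> blk G \<subseteq> pairs_on (verts G)
     \<and> red G \<subseteq> pairs_on (verts G) \<and> blk G \<inter> red G = {}"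

definition red_deg :: "'v trigraph \<Rightarrow> 'v \<Rightarrow> nat" where
  "red_deg G x = card {y \<in> verts G. {x, y} \<in> red G}"

definition max_red_deg_le :: "'v trigraph \<Rightarrow> nat \<Rightarrow> bool" where
  "max_red_deg_le G d \<longleftrightarrow> (\<forall>x \<in> verts G. red_deg G x \<le> d)"

text \<open>Trigraphs in a contraction sequence from G are represented with their
vertices being the parts (the sets of vertices of G merged into them).\<close>

definition lift :: "'v trigraph \<Rightarrow> 'v set trigraph" where
  "lift G = \<lparr> verts = (\<lambda>v. {v}) ` verts G,
             blk = (\<lambda>e. (\<lambda>v. {v}) ` e) ` blk G,
             red = (\<lambda>e. (\<lambda>v. {v}) ` e) ` red G \<rparr>"

definition contract :: "'v set trigraph \<Rightarrow> 'v set \<Rightarrow> 'v set \<Rightarrow> 'v set trigraph" where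
  "contract G u v =
     (let w = u \<union> v; Z = verts G - {u, v} in
      \<lparr> verts = Z \<union> {w},
        blk = {e \<in> blk G. u \<notin> e \<and> v \<notin> e}
              \<union> {{w, z} | z. z \<in> Z \<and> {u, z} \<in> blk G \<and> {v, z} \<in> blk G},
        red = {e \<in> red G. u \<notin> e \<and> v \<notin> e}
              \<union> {{w, z} | z. z \<in> Z \<and> \<not> ({u, z} \<in> blk G \<and> {v, z} \<in> blk G)
                     \<and> ({u, z} \<in> blk G \<union> red G \<or> {v, z} \<in> blk G \<union> red G)} \<rparr>)"

definition partial_seq :: "nat \<Rightarrow> 'v trigraph \<Rightarrow> 'v set trigraph list \<Rightarrow> bool" where
  "partial_seq d G Gs \<longleftrightarrow>
     Gs \<noteq> [] \<and> hd Gs = lift G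
     \<and> (\<forall>i. Suc i < length Gs \<longrightarrow>
          (\<exists>u \<in> verts (Gs ! i). \<exists>v \<in> verts (Gs ! i). u \<noteq> v
              \<and> Gs ! Suc i = contract (Gs ! i) u v))
     \<and> (\<forall>H \<in> set Gs. max_red_deg_le H d)"

definition adj :: "'v trigraph \<Rightarrow> 'v \<Rightarrow> 'v \<Rightarrow> bool" where
  "adj G x y \<longleftrightarrow> {x, y} \<in> blk G \<union> red G"

definition neighbours :: "'v trigraph \<Rightarrow> 'v \<Rightarrow> 'v set" where
  "neighbours G x = {y \<in> verts G. adj G x y}"

definition fence_black :: "(nat \<Rightarrow> 'v) \<Rightarrow> (nat \<Rightarrow> 'v) \<Rightarrow> 'v set set" where
  "fence_black a b =
     {{a i, a (Suc i)} | i. i \<in> {1..5}} \<union> {{a 6, a 1}}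
     \<union> {{b i, b (Suc i)} | i. i \<in> {1..5}} \<union> {{b 6, b 1}}
     \<union> {{b 1, a 6}}"

definition fence_red :: "(nat \<Rightarrow> 'v) \<Rightarrow> (nat \<Rightarrow> 'v) \<Rightarrow> 'v set set" where
  "fence_red a b =
     {{a i, b i} | i. i \<in> {1..6}} \<union> {{a i, b (Suc i)} | i. i \<in> {1..5}}"

definition fence_vs :: "(nat \<Rightarrow> 'v) \<Rightarrow> (nat \<Rightarrow> 'v) \<Rightarrow> 'v set" where
  "fence_vs a b = a ` {1..6} \<union> b ` {1..6}"

definition contains_fence :: "'v trigraph \<Rightarrow> (nat \<Rightarrow> 'v) \<Rightarrow> (nat \<Rightarrow> 'v) \<Rightarrow> bool" where
  "contains_fence G a b \<longleftrightarrow>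
     inj_on a {1..6} \<and> inj_on b {1..6} \<and> a ` {1..6} \<inter> b ` {1..6} = {}
     \<and> fence_vs a b \<subseteq> verts G
     \<and> {e \<in> blk G. e \<subseteq> fence_vs a b} = fence_black a b
     \<and> {e \<in> red G. e \<subseteq> fence_vs a b} = fence_red a b"

definition attached :: "'v trigraph \<Rightarrow> (nat \<Rightarrow> 'v) \<Rightarrow> (nat \<Rightarrow> 'v) \<Rightarrow> 'v set \<Rightarrow> bool" where
  "attached G a b S \<longleftrightarrow>
     S \<noteq> {} \<and> S \<subseteq> verts G - fence_vs a b
     \<and> (\<forall>i \<in> {1..6}. \<forall>s \<in> S. {a i, s} \<in> blk G)
     \<and> (\<forall>i \<in> {1..6}. \<forall>s \<in> S. \<not> adj G (b i) s)"

definition red_rel :: "'v trigraph \<Rightarrow> ('v \<times> 'v) set" where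
  "red_rel G = {(x, y). {x, y} \<in> red G}"

definition red_component :: "'v trigraph \<Rightarrow> 'v set \<Rightarrow> bool" where
  "red_component G C \<longleftrightarrow> C \<noteq> {} \<and> C \<subseteq> verts G
     \<and> (\<forall>x \<in> C. {y \<in> verts G. (x, y) \<in> (red_rel G)\<^sup>*} = C)"

definition attachment_rule ::
  "'v trigraph \<Rightarrow> (nat \<Rightarrow> 'v) \<Rightarrow> (nat \<Rightarrow> 'v) \<Rightarrow> 'v set \<Rightarrow> 'v set \<Rightarrow> bool" where
  "attachment_rule G a b S X \<longleftrightarrow>
     red_component G (fence_vs a b)
     \<and> X \<subseteq> verts G - (fence_vs a b \<union> S)
     \<and> (\<forall>i \<in> {1..6}. neighbours G (a i) - fence_vs a b = X \<union> S
          \<and> (\<forall>y \<in> X \<union> S. {a i, y} \<in> blk G))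
     \<and> (\<forall>i \<in> {1..6}. neighbours G (b i) - fence_vs a b = X
          \<and> (\<forall>y \<in> X. {b i, y} \<in> blk G))
     \<and> (\<forall>x \<in> X. \<forall>s \<in> S. adj G x s)"

end

theory Submission
  imports Defs
begin

definition IL :: "(bool\<times>nat) list" where
"IL = [(True,1),(True,2),(True,3),(True,4),(True,5),(True,6),(False,1),(False,2),(False,3),(False,4),(False,5),(False,6)]"
definition BP :: "((bool\<times>nat)\<times>(bool\<times>nat)) set" where
"BP = {((True,1),(True,2)), ((True,2),(True,3)),((True,3),(True,4)),((True,4),(True,5)),((True,5),(True,6)),((True,6),(True,1)),
 ((False,1),(False,2)), ((False,2),(False,3)),((False,3),(False,4)),((False,4),(False,5)),((False,5),(False,6)),((False,6),(False,1)),((False,1),(True,6))}"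
definition RP :: "((bool\<times>nat)\<times>(bool\<times>nat)) set" where
"RP = {((True,1),(False,1)),((True,2),(False,2)),((True,3),(False,3)),((True,4),(False,4)),((True,5),(False,5)),((True,6),(False,6)),
 ((True,1),(False,2)),((True,2),(False,3)),((True,3),(False,4)),((True,4),(False,5)),((True,5),(False,6))}"
definition BLK where "BLK x y \<longleftrightarrow> (x,y) \<in> BP \<or> (y,x) \<in> BP"
definition RED where "RED x y \<longleftrightarrow> (x,y) \<in> RP \<or> (y,x) \<in> RP"
definition ADJ where "ADJ x y \<longleftrightarrow> BLK x y \<or> RED x y"

definition vtx :: "(nat \<Rightarrow> 'v) \<Rightarrow> (nat \<Rightarrow> 'v) \<Rightarrow> bool \<times> nat \<Rightarrow> 'v" where
  "vtx a b k = (if fst k then a (snd k) else b (snd k))"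

lemma one_six: "{1..6::nat} = {1,2,3,4,5,6}" by auto
lemma one_five: "{1..5::nat} = {1,2,3,4,5}" by auto

lemma fence_vs_eq: "fence_vs a b = vtx a b ` set IL"
  unfolding fence_vs_def one_six IL_def by (auto simp: vtx_def)

lemma setcompr_img: "{f i | i. i \<in> A} = f ` A" by blast

lemma fence_black_eq: "fence_black a b = (\<lambda>(x,y). {vtx a b x, vtx a b y}) ` BP"
proof -
  have e1: "\<And>f::nat\<Rightarrow>'a set. {f i | i. i \<in> {1..5}} = f ` {1..5}" by blast
  show ?thesis unfolding fence_black_def setcompr_img one_five BP_def by (simp add: vtx_def insert_commute del: One_nat_def)
qed

lemma fence_red_eq: "fence_red a b = (\<lambda>(x,y). {vtx a b x, vtx a b y}) ` RP"
proof -
  have e1: "\<And>f::nat\<Rightarrow>'a set. {f i | i. i \<in> {1..5}} = f ` {1..5}" by blast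
  have e2: "\<And>f::nat\<Rightarrow>'a set. {f i | i. i \<in> {1..6}} = f ` {1..6}" by blast
  show ?thesis unfolding fence_red_def setcompr_img one_five one_six RP_def by (simp add: vtx_def insert_commute del: One_nat_def)
qed

lemma vtx_inj:
  assumes "contains_fence G a b" shows "inj_on (vtx a b) (set IL)"
proof (rule inj_onI)
  fix x y assume x: "x \<in> set IL" and y: "y \<in> set IL" and e: "vtx a b x = vtx a b y"
  have ia: "inj_on a {1..6}" using assms unfolding contains_fence_def by (elim conjE) assumption
  have ib: "inj_on b {1..6}" using assms unfolding contains_fence_def by (elim conjE) assumption
  have d: "a ` {1..6} \<inter> b ` {1..6} = {}" using assms unfolding contains_fence_def by (elim conjE) assumption
  obtain t i where xx: "x = (t,i)" by (cases x)
  obtain s j where yy: "y = (s,j)" by (cases y)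
  have i: "i \<in> {1..6}" using x xx unfolding IL_def by auto
  have j: "j \<in> {1..6}" using y yy unfolding IL_def by auto
  have ai: "a i \<in> a ` {1..6}" "a j \<in> a ` {1..6}" using i j by blast+
  have bi: "b i \<in> b ` {1..6}" "b j \<in> b ` {1..6}" using i j by blast+
  show "x = y"
  proof (cases t)
    case True
    show ?thesis
    proof (cases s)
      case True
      with \<open>t\<close> e xx yy have "a i = a j" by (simp add: vtx_def)
      hence "i = j" using inj_onD[OF ia _ i j] by blast
      thus ?thesis using xx yy \<open>t\<close> \<open>s\<close> by simp
    next
      case False
      with \<open>t\<close> e xx yy have "a i = b j" by (simp add: vtx_def)
      hence False using d ai(1) bi(2) by (metis IntI empty_iff)
      thus ?thesis ..
    qed
  next
    case False
    show ?thesis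
    proof (cases s)
      case True
      with \<open>\<not>t\<close> e xx yy have "b i = a j" by (simp add: vtx_def)
      hence False using d ai(2) bi(1) by (metis IntI empty_iff)
      thus ?thesis ..
    next
      case False
      with \<open>\<not>t\<close> e xx yy have "b i = b j" by (simp add: vtx_def)
      hence "i = j" using inj_onD[OF ib _ i j] by blast
      thus ?thesis using xx yy \<open>\<not>t\<close> \<open>\<not>s\<close> by simp
    qed
  qed
qed

lemma BP_sub: "BP \<subseteq> set IL \<times> set IL" by (simp add: BP_def IL_def)
lemma RP_sub: "RP \<subseteq> set IL \<times> set IL" by (simp add: RP_def IL_def)

lemma doubleton_vtx:
  assumes "contains_fence G a b" "x \<in> set IL" "y \<in> set IL" "x' \<in> set IL" "y' \<in> set IL"
  shows "({vtx a b x, vtx a b y} = {vtx a b x', vtx a b y'}) \<longleftrightarrow> (x = x' \<and> y = y' \<or> x = y' \<and> y = x')"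
proof -
  have e: "\<And>p q. p \<in> set IL \<Longrightarrow> q \<in> set IL \<Longrightarrow> vtx a b p = vtx a b q \<longleftrightarrow> p = q"
    using inj_on_eq_iff[OF vtx_inj[OF assms(1)]] by blast
  show ?thesis unfolding doubleton_eq_iff using assms(2-) by (simp add: e)
qed

lemma mem_pairs_image:
  assumes "contains_fence G a b" "x \<in> set IL" "y \<in> set IL" "R \<subseteq> set IL \<times> set IL"
  shows "{vtx a b x, vtx a b y} \<in> (\<lambda>(x,y). {vtx a b x, vtx a b y}) ` R \<longleftrightarrow> (x,y) \<in> R \<or> (y,x) \<in> R"
proof
  assume "{vtx a b x, vtx a b y} \<in> (\<lambda>(x,y). {vtx a b x, vtx a b y}) ` R"
  then obtain x' y' where r: "(x',y') \<in> R" and e: "{vtx a b x, vtx a b y} = {vtx a b x', vtx a b y'}" by auto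
  have "x' \<in> set IL" "y' \<in> set IL" using r assms(4) by auto
  with e doubleton_vtx[OF assms(1-3)] r show "(x,y) \<in> R \<or> (y,x) \<in> R" by auto
next
  assume "(x,y) \<in> R \<or> (y,x) \<in> R"
  thus "{vtx a b x, vtx a b y} \<in> (\<lambda>(x,y). {vtx a b x, vtx a b y}) ` R"
    by (auto simp: insert_commute intro: rev_image_eqI)
qed

lemma card_IL: "card {k\<in>set IL. P k} = length (filter P IL)"
proof -
  have "card (set (filter P IL)) = length (filter P IL)" by (rule distinct_card) (simp add: IL_def)
  thus ?thesis by (simp only: set_filter)
qed

lemma CA: "length (filter (\<lambda>k. fst k) IL) = 6" by (simp add: IL_def)
lemma CB: "length (filter (\<lambda>k. \<not> fst k) IL) = 6" by (simp add: IL_def)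

lemma C4: "\<forall>j\<in>set IL. 5 \<le> length (filter (\<lambda>k. k\<noteq>j \<and> (fst k \<or> ADJ j k) \<and> (\<not>fst k \<or> \<not> BLK j k)) IL)"
  by (simp add: IL_def ADJ_def BLK_def RED_def BP_def RP_def)
lemma C5: "\<forall>j\<in>set IL. 5 \<le> length (filter (\<lambda>k. k\<noteq>j \<and> \<not> BLK j k) IL)"
  by (simp add: IL_def ADJ_def BLK_def RED_def BP_def RP_def)
lemma C6: "\<forall>j1\<in>set IL. \<forall>j2\<in>set IL. j1 \<noteq> j2 \<longrightarrow> 5 \<le> length (filter (\<lambda>k. k\<noteq>j1 \<and> k\<noteq>j2 \<and> (ADJ j1 k \<or> ADJ j2 k) \<and> (\<not>BLK j1 k \<or> \<not> BLK j2 k)) IL) + (if fst j1 \<noteq> fst j2 then 2 else 0)"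
  by (simp add: IL_def ADJ_def BLK_def RED_def BP_def RP_def)

definition allblk :: "'v trigraph \<Rightarrow> 'v set \<Rightarrow> 'v set \<Rightarrow> bool" where
  "allblk G P Q \<longleftrightarrow> (\<forall>p\<in>P. \<forall>q\<in>Q. {p,q} \<in> blk G)"
definition allnon :: "'v trigraph \<Rightarrow> 'v set \<Rightarrow> 'v set \<Rightarrow> bool" where
  "allnon G P Q \<longleftrightarrow> (\<forall>p\<in>P. \<forall>q\<in>Q. {p,q} \<notin> blk G \<union> red G)"

definition good :: "'v trigraph \<Rightarrow> 'v set trigraph \<Rightarrow> bool" where
  "good G H \<longleftrightarrow>
    (\<forall>P\<in>verts H. P \<noteq> {} \<and> P \<subseteq> verts G) \<and> (\<forall>P\<in>verts H. \<forall>Q\<in>verts H. P \<noteq> Q \<longrightarrow> P \<inter> Q = {})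
    \<and> \<Union>(verts H) = verts G
    \<and> (\<forall>P\<in>verts H. \<forall>Q\<in>verts H. P \<noteq> Q \<longrightarrow>
          ({P,Q} \<in> blk H \<longleftrightarrow> allblk G P Q) \<and> ({P,Q} \<in> red H \<longleftrightarrow> \<not> allblk G P Q \<and> \<not> allnon G P Q))
    \<and> (\<forall>e\<in>blk H \<union> red H. \<exists>P\<in>verts H. \<exists>Q\<in>verts H. P \<noteq> Q \<and> e = {P,Q})"

lemma allblk_sym: "allblk G P Q = allblk G Q P"
  unfolding allblk_def by (metis insert_commute)
lemma allnon_sym: "allnon G P Q = allnon G Q P"
  unfolding allnon_def by (metis insert_commute)
lemma allblk_Un: "allblk G (u \<union> v) Q \<longleftrightarrow> allblk G u Q \<and> allblk G v Q"
  unfolding allblk_def by auto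
lemma allnon_Un: "allnon G (u \<union> v) Q \<longleftrightarrow> allnon G u Q \<and> allnon G v Q"
  unfolding allnon_def by auto
lemma allblk_allnon: "P \<noteq> {} \<Longrightarrow> Q \<noteq> {} \<Longrightarrow> allblk G P Q \<Longrightarrow> \<not> allnon G P Q"
  unfolding allblk_def allnon_def by auto

lemma good_lift:
  assumes wf: "wf_trigraph G" shows "good G (lift G)"
proof -
  let ?s = "\<lambda>v. {v}"
  have sinj: "inj ?s" by (auto simp: inj_on_def)
  have inj: "inj (image ?s)" using inj_image_eq_iff[OF sinj] by (auto intro: injI)
  have pairs: "e \<in> blk G \<union> red G \<Longrightarrow> \<exists>x y. x \<in> verts G \<and> y \<in> verts G \<and> x \<noteq> y \<and> e = {x,y}" for e
    using wf unfolding wf_trigraph_def pairs_on_def by blast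
  have img: "image ?s {p,q} = {{p},{q}}" for p q :: 'a by auto
  have memb: "{{p},{q}} \<in> image (image ?s) E \<longleftrightarrow> {p,q} \<in> E" for p q E
    using inj_image_mem_iff[OF inj, of "{p,q}" E] by simp
  show ?thesis unfolding good_def
  proof (intro conjI ballI impI)
    show "\<Union>(verts (lift G)) = verts G" by (auto simp: lift_def)
  next
    fix P assume "P \<in> verts (lift G)" thus "P \<noteq> {}" "P \<subseteq> verts G" by (auto simp: lift_def)
  next
    fix P Q assume "P \<in> verts (lift G)" "Q \<in> verts (lift G)" "P \<noteq> Q" thus "P \<inter> Q = {}" by (auto simp: lift_def)
  next
    fix P Q assume P: "P \<in> verts (lift G)" and Q: "Q \<in> verts (lift G)" and ne: "P \<noteq> Q"
    then obtain p q where pq: "P = {p}" "Q = {q}" by (auto simp: lift_def)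
    show "({P,Q} \<in> blk (lift G)) = allblk G P Q"
      using memb[of p q "blk G"] pq by (simp add: lift_def allblk_def)
    show "({P,Q} \<in> red (lift G)) = (\<not> allblk G P Q \<and> \<not> allnon G P Q)"
      using memb[of p q "red G"] pq wf by (auto simp: lift_def allblk_def allnon_def wf_trigraph_def)
  next
    fix e assume "e \<in> blk (lift G) \<union> red (lift G)"
    then obtain e' where e': "e' \<in> blk G \<union> red G" "e = image ?s e'" by (auto simp: lift_def)
    then obtain x y where "x \<in> verts G" "y \<in> verts G" "x \<noteq> y" "e' = {x,y}" using pairs by blast
    thus "\<exists>P\<in>verts (lift G). \<exists>Q\<in>verts (lift G). P \<noteq> Q \<and> e = {P, Q}"
      using e' by (auto simp: lift_def)
  qed
qed

lemma goodD1: "good G H \<Longrightarrow> \<forall>P\<in>verts H. P \<noteq> {} \<and> P \<subseteq> verts G"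
  unfolding good_def by (elim conjE) assumption
lemma goodD2: "good G H \<Longrightarrow> \<forall>P\<in>verts H. \<forall>Q\<in>verts H. P \<noteq> Q \<longrightarrow> P \<inter> Q = {}"
  unfolding good_def by (elim conjE) assumption
lemma goodD3: "good G H \<Longrightarrow> \<Union>(verts H) = verts G"
  unfolding good_def by (elim conjE) assumption
lemma goodD4: "good G H \<Longrightarrow> \<forall>P\<in>verts H. \<forall>Q\<in>verts H. P \<noteq> Q \<longrightarrow>
          ({P,Q} \<in> blk H \<longleftrightarrow> allblk G P Q) \<and> ({P,Q} \<in> red H \<longleftrightarrow> \<not> allblk G P Q \<and> \<not> allnon G P Q)"
  unfolding good_def by (elim conjE) assumption
lemma goodD5: "good G H \<Longrightarrow> \<forall>e\<in>blk H \<union> red H. \<exists>P\<in>verts H. \<exists>Q\<in>verts H. P \<noteq> Q \<and> e = {P,Q}"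
  unfolding good_def by (elim conjE) assumption

lemma dbl_eq: "{w,Q} = {w,z} \<longleftrightarrow> Q = z" by (auto simp: doubleton_eq_iff)
lemma mem_wz: "{w,Q} \<in> {{w,z} | z. C z} \<longleftrightarrow> C Q"
proof
  assume "{w,Q} \<in> {{w,z} | z. C z}"
  then obtain z where "{w,Q} = {w,z}" "C z" by blast
  thus "C Q" by (simp add: dbl_eq)
qed blast
lemma nmem_wz: "w \<noteq> P \<Longrightarrow> w \<noteq> Q \<Longrightarrow> {P,Q} \<notin> {{w,z} | z. C z}"
  by blast

lemma mem_wzE: "e \<in> {{w,z} | z. z \<in> Z \<and> C z} \<Longrightarrow> \<exists>z. z \<in> Z \<and> e = {w,z}" by blast

lemma mem_filter_Un: "x \<notin> A \<Longrightarrow> (x \<in> {e\<in>A. P e} \<union> B) = (x \<in> B)" by blast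

lemma good_contract:
  assumes g: "good G H" and u: "u \<in> verts H" and v: "v \<in> verts H" and uv: "u \<noteq> v"
  shows "good G (contract H u v)"
proof -
  define w where "w = u \<union> v"
  define Z where "Z = verts H - {u,v}"
  note g1 = goodD1[OF g] and g2 = goodD2[OF g] and g4 = goodD4[OF g] and g5 = goodD5[OF g]
  have ne: "\<And>P. P \<in> verts H \<Longrightarrow> P \<noteq> {}" using g1 by blast
  have sub: "\<And>P. P \<in> verts H \<Longrightarrow> P \<subseteq> verts G" using g1 by blast
  have disj: "\<And>P Q. P \<in> verts H \<Longrightarrow> Q \<in> verts H \<Longrightarrow> P \<noteq> Q \<Longrightarrow> P \<inter> Q = {}" using g2 by blast
  have un: "\<Union>(verts H) = verts G" by (rule goodD3[OF g])
  have eb: "\<And>P Q. P \<in> verts H \<Longrightarrow> Q \<in> verts H \<Longrightarrow> P \<noteq> Q \<Longrightarrow> ({P,Q} \<in> blk H \<longleftrightarrow> allblk G P Q)"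
    using g4 by blast
  have er: "\<And>P Q. P \<in> verts H \<Longrightarrow> Q \<in> verts H \<Longrightarrow> P \<noteq> Q \<Longrightarrow> ({P,Q} \<in> red H \<longleftrightarrow> \<not> allblk G P Q \<and> \<not> allnon G P Q)"
    using g4 by blast
  have ee: "\<And>e. e \<in> blk H \<union> red H \<Longrightarrow> \<exists>P\<in>verts H. \<exists>Q\<in>verts H. P \<noteq> Q \<and> e = {P,Q}"
    using g5 by blast
  have wnot: "w \<notin> verts H"
  proof
    assume wH: "w \<in> verts H"
    show False
    proof (cases "w = u")
      case True thus False using disj[OF u v uv] ne[OF v] by (auto simp: w_def)
    next
      case False
      hence "w \<inter> u = {}" using disj[OF wH u] by auto
      thus False using ne[OF u] by (auto simp: w_def)
    qed
  qed
  have wne: "w \<noteq> {}" using ne[OF u] by (auto simp: w_def)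
  have wZ: "w \<notin> Z" using wnot by (auto simp: Z_def)
  have Zsub: "Z \<subseteq> verts H" by (auto simp: Z_def)
  have vc: "verts (contract H u v) = Z \<union> {w}" by (simp add: contract_def Let_def w_def Z_def)
  have bc: "blk (contract H u v) = {e \<in> blk H. u \<notin> e \<and> v \<notin> e}
              \<union> {{w, z} | z. z \<in> Z \<and> {u, z} \<in> blk H \<and> {v, z} \<in> blk H}"
    by (simp add: contract_def Let_def w_def Z_def)
  have rc: "red (contract H u v) = {e \<in> red H. u \<notin> e \<and> v \<notin> e}
              \<union> {{w, z} | z. z \<in> Z \<and> \<not> ({u, z} \<in> blk H \<and> {v, z} \<in> blk H)
                     \<and> ({u, z} \<in> blk H \<union> red H \<or> {v, z} \<in> blk H \<union> red H)}"
    by (simp add: contract_def Let_def w_def Z_def)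
  have notin_edge: "w \<notin> e" if "e \<in> blk H \<union> red H" for e
    using ee[OF that] wnot by auto
  have adjiff: "{x,Q} \<in> blk H \<union> red H \<longleftrightarrow> \<not> allnon G x Q" if "x \<in> verts H" "Q \<in> verts H" "x \<noteq> Q" for x Q
    using eb[OF that] er[OF that] allblk_allnon[OF ne[OF that(1)] ne[OF that(2)]] by auto
  have wb: "{w,Q} \<in> blk (contract H u v) \<longleftrightarrow> allblk G w Q" if Q: "Q \<in> Z" for Q
  proof -
    have QH: "Q \<in> verts H" "u \<noteq> Q" "v \<noteq> Q" using Q unfolding Z_def by blast+
    have "{w,Q} \<notin> blk H" using notin_edge by blast
    hence "{w,Q} \<in> blk (contract H u v) \<longleftrightarrow> {w,Q} \<in> {{w, z} | z. z \<in> Z \<and> {u, z} \<in> blk H \<and> {v, z} \<in> blk H}"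
      unfolding bc by (rule mem_filter_Un)
    also have "\<dots> \<longleftrightarrow> Q \<in> Z \<and> {u, Q} \<in> blk H \<and> {v, Q} \<in> blk H" by (rule mem_wz)
    also have "\<dots> \<longleftrightarrow> allblk G u Q \<and> allblk G v Q"
      using Q eb[OF u QH(1) QH(2)] eb[OF v QH(1) QH(3)] by blast
    also have "\<dots> \<longleftrightarrow> allblk G w Q" unfolding w_def allblk_Un ..
    finally show ?thesis .
  qed
  have wr: "{w,Q} \<in> red (contract H u v) \<longleftrightarrow> \<not> allblk G w Q \<and> \<not> allnon G w Q" if Q: "Q \<in> Z" for Q
  proof -
    have QH: "Q \<in> verts H" "u \<noteq> Q" "v \<noteq> Q" using Q unfolding Z_def by blast+
    have "{w,Q} \<notin> red H" using notin_edge by blast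
    hence "{w,Q} \<in> red (contract H u v) \<longleftrightarrow> {w,Q} \<in> {{w, z} | z. z \<in> Z \<and> \<not> ({u, z} \<in> blk H \<and> {v, z} \<in> blk H)
                     \<and> ({u, z} \<in> blk H \<union> red H \<or> {v, z} \<in> blk H \<union> red H)}"
      unfolding rc by (rule mem_filter_Un)
    also have "\<dots> \<longleftrightarrow> Q \<in> Z \<and> \<not> ({u, Q} \<in> blk H \<and> {v, Q} \<in> blk H)
                     \<and> ({u, Q} \<in> blk H \<union> red H \<or> {v, Q} \<in> blk H \<union> red H)" by (rule mem_wz)
    also have "\<dots> \<longleftrightarrow> \<not> (allblk G u Q \<and> allblk G v Q) \<and> (\<not> allnon G u Q \<or> \<not> allnon G v Q)"
      using Q eb[OF u QH(1) QH(2)] eb[OF v QH(1) QH(3)] adjiff[OF u QH(1) QH(2)] adjiff[OF v QH(1) QH(3)]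
      by blast
    also have "\<dots> \<longleftrightarrow> \<not> allblk G w Q \<and> \<not> allnon G w Q" unfolding w_def allblk_Un allnon_Un by blast
    finally show ?thesis .
  qed
  have zb: "{P,Q} \<in> blk (contract H u v) \<longleftrightarrow> {P,Q} \<in> blk H" if "P \<in> Z" "Q \<in> Z" for P Q
  proof -
    have "w \<noteq> P" "w \<noteq> Q" using that wZ by blast+
    hence "{P,Q} \<notin> {{w, z} | z. z \<in> Z \<and> {u, z} \<in> blk H \<and> {v, z} \<in> blk H}" by (rule nmem_wz)
    moreover have "u \<notin> {P,Q}" "v \<notin> {P,Q}" using that unfolding Z_def by blast+
    ultimately show ?thesis unfolding bc by blast
  qed
  have zr: "{P,Q} \<in> red (contract H u v) \<longleftrightarrow> {P,Q} \<in> red H" if "P \<in> Z" "Q \<in> Z" for P Q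
  proof -
    have "w \<noteq> P" "w \<noteq> Q" using that wZ by blast+
    hence "{P,Q} \<notin> {{w, z} | z. z \<in> Z \<and> \<not> ({u, z} \<in> blk H \<and> {v, z} \<in> blk H)
                     \<and> ({u, z} \<in> blk H \<union> red H \<or> {v, z} \<in> blk H \<union> red H)}" by (rule nmem_wz)
    moreover have "u \<notin> {P,Q}" "v \<notin> {P,Q}" using that unfolding Z_def by blast+
    ultimately show ?thesis unfolding rc by blast
  qed
  have ZH: "P \<in> Z \<Longrightarrow> P \<in> verts H" for P unfolding Z_def by blast
  have wsub: "w \<subseteq> verts G" using sub[OF u] sub[OF v] unfolding w_def by blast
  have dz: "R \<inter> w = {}" if "R \<in> Z" for R
  proof -
    have "R \<noteq> u" "R \<noteq> v" "R \<in> verts H" using that unfolding Z_def by blast+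
    thus ?thesis using disj[OF \<open>R \<in> verts H\<close> u] disj[OF \<open>R \<in> verts H\<close> v] unfolding w_def by blast
  qed
  have edge: "({P,Q} \<in> blk (contract H u v) \<longleftrightarrow> allblk G P Q) \<and> ({P,Q} \<in> red (contract H u v) \<longleftrightarrow> \<not> allblk G P Q \<and> \<not> allnon G P Q)"
    if P: "P \<in> Z \<union> {w}" and Q: "Q \<in> Z \<union> {w}" and PQ: "P \<noteq> Q" for P Q
  proof (cases "P = w")
    case True
    hence "Q \<in> Z" using Q PQ by blast
    thus ?thesis using wb[of Q] wr[of Q] True by simp
  next
    case False
    hence PZ: "P \<in> Z" using P by blast
    show ?thesis
    proof (cases "Q = w")
      case True
      have c: "{P,Q} = {w,P}" using True by (simp add: insert_commute)
      show ?thesis unfolding c using wb[OF PZ] wr[OF PZ] True allblk_sym[of G P w] allnon_sym[of G P w] by simp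
    next
      case False
      hence QZ: "Q \<in> Z" using Q by blast
      show ?thesis using zb[OF PZ QZ] zr[OF PZ QZ] eb[OF ZH[OF PZ] ZH[OF QZ] PQ] er[OF ZH[OF PZ] ZH[OF QZ] PQ] by simp
    qed
  qed
  show ?thesis unfolding good_def vc
  proof (intro conjI ballI impI)
    fix P assume "P \<in> Z \<union> {w}"
    hence "P = w \<or> P \<in> verts H" using ZH by blast
    thus "P \<noteq> {}" "P \<subseteq> verts G" using wne wsub ne sub by blast+
  next
    fix P Q assume P: "P \<in> Z \<union> {w}" and Q: "Q \<in> Z \<union> {w}" and PQ: "P \<noteq> Q"
    show "P \<inter> Q = {}"
    proof (cases "P = w")
      case True thus ?thesis using Q PQ dz by blast
    next
      case False
      hence "P \<in> Z" using P by blast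
      show ?thesis
      proof (cases "Q = w")
        case True thus ?thesis using \<open>P \<in> Z\<close> dz by blast
      next
        case False
        hence "Q \<in> Z" using Q by blast
        thus ?thesis using disj[OF ZH[OF \<open>P \<in> Z\<close>] ZH[OF \<open>Q \<in> Z\<close>] PQ] by blast
      qed
    qed
    show "({P, Q} \<in> blk (contract H u v)) = allblk G P Q" using edge[OF P Q PQ] by blast
    show "({P, Q} \<in> red (contract H u v)) = (\<not> allblk G P Q \<and> \<not> allnon G P Q)" using edge[OF P Q PQ] by blast
  next
    have vh: "verts H = insert u (insert v Z)" using u v unfolding Z_def by auto
    have "\<Union>(Z \<union> {w}) = \<Union>(verts H)" unfolding vh w_def by auto
    thus "\<Union>(Z \<union> {w}) = verts G" using un by simp
  next
    fix e assume e: "e \<in> blk (contract H u v) \<union> red (contract H u v)"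
    show "\<exists>P\<in>Z \<union> {w}. \<exists>Q\<in>Z \<union> {w}. P \<noteq> Q \<and> e = {P, Q}"
    proof (cases "e \<in> blk H \<union> red H \<and> u \<notin> e \<and> v \<notin> e")
      case True
      hence "e \<in> blk H \<union> red H" by (rule conjunct1)
      from ee[OF this] obtain P Q where PQ: "P \<in> verts H" "Q \<in> verts H" "P \<noteq> Q" "e = {P,Q}" by blast
      have "u \<notin> e" "v \<notin> e" using True by simp_all
      hence "P \<in> Z" "Q \<in> Z" using PQ unfolding Z_def by auto
      show ?thesis
      proof (rule bexI[of _ P], rule bexI[of _ Q])
        show "P \<noteq> Q \<and> e = {P, Q}" using PQ by simp
        show "Q \<in> Z \<union> {w}" using \<open>Q \<in> Z\<close> by simp
        show "P \<in> Z \<union> {w}" using \<open>P \<in> Z\<close> by simp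
      qed
    next
      case False
      define B1 where "B1 = {{w, z} | z. z \<in> Z \<and> {u, z} \<in> blk H \<and> {v, z} \<in> blk H}"
      define B2 where "B2 = {{w, z} | z. z \<in> Z \<and> \<not> ({u, z} \<in> blk H \<and> {v, z} \<in> blk H)
                     \<and> ({u, z} \<in> blk H \<union> red H \<or> {v, z} \<in> blk H \<union> red H)}"
      have e2: "e \<in> ({e \<in> blk H. u \<notin> e \<and> v \<notin> e} \<union> B1) \<union> ({e \<in> red H. u \<notin> e \<and> v \<notin> e} \<union> B2)"
        using e unfolding bc rc B1_def B2_def .
      have n1: "e \<notin> {e \<in> blk H. u \<notin> e \<and> v \<notin> e}" "e \<notin> {e \<in> red H. u \<notin> e \<and> v \<notin> e}"
        using False by blast+
      have "e \<in> B1 \<or> e \<in> B2" using e2 n1 by blast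
      hence "\<exists>z. z \<in> Z \<and> e = {w,z}"
      proof
        assume "e \<in> B1" thus ?thesis unfolding B1_def by (rule mem_wzE)
      next
        assume "e \<in> B2" thus ?thesis unfolding B2_def by (rule mem_wzE)
      qed
      then obtain z where z: "z \<in> Z" "e = {w,z}" by blast
      have "z \<noteq> w" using z wZ by blast
      show ?thesis
      proof (rule bexI[of _ w], rule bexI[of _ z])
        show "w \<noteq> z \<and> e = {w, z}" using z \<open>z \<noteq> w\<close> by simp
        show "z \<in> Z \<union> {w}" using z by simp
        show "w \<in> Z \<union> {w}" by simp
      qed
    qed
  qed
qed

definition part_of :: "'v set trigraph \<Rightarrow> 'v \<Rightarrow> 'v set" where
  "part_of H g = (THE P. P \<in> verts H \<and> g \<in> P)"

lemma part_of:
  assumes g: "good G H" and gv: "x \<in> verts G"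
  shows "part_of H x \<in> verts H \<and> x \<in> part_of H x"
proof -
  have "x \<in> \<Union>(verts H)" using goodD3[OF g] gv by simp
  then obtain P where P: "P \<in> verts H" "x \<in> P" by blast
  have uniq: "Q = P" if "Q \<in> verts H \<and> x \<in> Q" for Q
  proof (rule ccontr)
    assume "Q \<noteq> P"
    hence "Q \<inter> P = {}" using goodD2[OF g] that P(1) by blast
    thus False using that P(2) by blast
  qed
  have "part_of H x = P" unfolding part_of_def
    by (rule the_equality) (use P uniq in blast)+
  thus ?thesis using P by simp
qed

lemma part_of_eq:
  assumes g: "good G H" and P: "P \<in> verts H" "x \<in> P"
  shows "part_of H x = P"
proof -
  have "x \<in> verts G" using goodD1[OF g] P by blast
  from part_of[OF g this] have "part_of H x \<in> verts H" "x \<in> part_of H x" by blast+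
  show ?thesis
  proof (rule ccontr)
    assume "part_of H x \<noteq> P"
    hence "part_of H x \<inter> P = {}" using goodD2[OF g] P(1) \<open>part_of H x \<in> verts H\<close> by blast
    thus False using \<open>x \<in> part_of H x\<close> P(2) by blast
  qed
qed

lemma red_crit:
  assumes g: "good G H" and PQ: "P \<in> verts H" "Q \<in> verts H" "P \<noteq> Q"
    and w1: "p \<in> P" "q \<in> Q" "{p,q} \<in> blk G \<union> red G"
    and w2: "p' \<in> P" "q' \<in> Q" "{p',q'} \<notin> blk G"
  shows "{P,Q} \<in> red H"
proof -
  have "\<not> allblk G P Q" using w2 unfolding allblk_def by blast
  moreover have "\<not> allnon G P Q" using w1 unfolding allnon_def by blast
  ultimately show ?thesis using goodD4[OF g] PQ by blast
qed

lemma red_deg_ge: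
  assumes g: "good G H" and fin: "finite (verts G)" and N: "N \<subseteq> verts H" "\<forall>Q\<in>N. {w,Q} \<in> red H"
  shows "card N \<le> red_deg H w"
proof -
  have "verts H \<subseteq> Pow (verts G)" using goodD1[OF g] by blast
  hence fH: "finite (verts H)" using fin by (meson finite_Pow_iff finite_subset)
  have "N \<subseteq> {y \<in> verts H. {w, y} \<in> red H}" using N by blast
  moreover have "finite {y \<in> verts H. {w, y} \<in> red H}" using fH by simp
  ultimately show ?thesis unfolding red_deg_def by (rule card_mono[rotated])
qed

locale fctx =
  fixes G :: "'v trigraph" and a b :: "nat \<Rightarrow> 'v" and S X Y :: "'v set"
  assumes wf: "wf_trigraph G" and cf: "contains_fence G a b" and att: "attached G a b S"
    and ar: "attachment_rule G a b S X" and Ydef: "Y = verts G - (fence_vs a b \<union> S \<union> X)"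
begin

abbreviation "F \<equiv> fence_vs a b"
abbreviation "vx \<equiv> vtx a b"

lemma finV: "finite (verts G)" using wf unfolding wf_trigraph_def by (elim conjE) assumption
lemma F_sub: "F \<subseteq> verts G" using cf unfolding contains_fence_def by (elim conjE) assumption
lemma blkF: "{e \<in> blk G. e \<subseteq> F} = fence_black a b" using cf unfolding contains_fence_def by (elim conjE) assumption
lemma redF: "{e \<in> red G. e \<subseteq> F} = fence_red a b" using cf unfolding contains_fence_def by (elim conjE) assumption
lemma S_ne: "S \<noteq> {}" using att unfolding attached_def by (elim conjE) assumption
lemma S_sub: "S \<subseteq> verts G - F" using att unfolding attached_def by (elim conjE) assumption
lemma S_blk: "\<forall>i \<in> {1..6}. \<forall>s \<in> S. {a i, s} \<in> blk G" using att unfolding attached_def by (elim conjE) assumption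
lemma S_nadj: "\<forall>i \<in> {1..6}. \<forall>s \<in> S. \<not> adj G (b i) s" using att unfolding attached_def by (elim conjE) assumption
lemma X_sub: "X \<subseteq> verts G - (F \<union> S)" using ar unfolding attachment_rule_def by (elim conjE) assumption
lemma A_nb: "\<forall>i \<in> {1..6}. neighbours G (a i) - F = X \<union> S \<and> (\<forall>y \<in> X \<union> S. {a i, y} \<in> blk G)"
  using ar unfolding attachment_rule_def by (elim conjE) assumption
lemma B_nb: "\<forall>i \<in> {1..6}. neighbours G (b i) - F = X \<and> (\<forall>y \<in> X. {b i, y} \<in> blk G)"
  using ar unfolding attachment_rule_def by (elim conjE) assumption

lemma vx_F: "k \<in> set IL \<Longrightarrow> vx k \<in> F" unfolding fence_vs_eq by blast
lemma F_vx: "f \<in> F \<Longrightarrow> \<exists>k\<in>set IL. f = vx k" unfolding fence_vs_eq by blast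
lemma snd_IL: "k \<in> set IL \<Longrightarrow> snd k \<in> {1..6}" unfolding IL_def by auto
lemma vx_inj: "inj_on vx (set IL)" by (rule vtx_inj[OF cf])
lemma vx_eq: "k \<in> set IL \<Longrightarrow> j \<in> set IL \<Longrightarrow> vx k = vx j \<longleftrightarrow> k = j"
  using vx_inj by (simp add: inj_on_eq_iff)

lemma disj_FS: "F \<inter> S = {}" using S_sub by blast
lemma disj_FX: "F \<inter> X = {}" using X_sub by blast
lemma disj_SX: "S \<inter> X = {}" using X_sub by blast
lemma disj_Y: "Y \<inter> F = {}" "Y \<inter> S = {}" "Y \<inter> X = {}" using Ydef by blast+
lemma V_cover: "verts G = F \<union> S \<union> X \<union> Y" using Ydef F_sub S_sub X_sub by blast

lemma blk_iff:
  assumes "x \<in> set IL" "y \<in> set IL"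
  shows "{vx x, vx y} \<in> blk G \<longleftrightarrow> BLK x y"
proof -
  have sub: "{vx x, vx y} \<subseteq> F" using vx_F assms by blast
  have "{vx x, vx y} \<in> blk G \<longleftrightarrow> {vx x, vx y} \<in> {e \<in> blk G. e \<subseteq> F}" using sub by blast
  also have "\<dots> \<longleftrightarrow> {vx x, vx y} \<in> (\<lambda>(x,y). {vx x, vx y}) ` BP" unfolding blkF fence_black_eq ..
  also have "\<dots> \<longleftrightarrow> BLK x y" unfolding BLK_def by (rule mem_pairs_image[OF cf assms BP_sub])
  finally show ?thesis .
qed

lemma red_iff:
  assumes "x \<in> set IL" "y \<in> set IL"
  shows "{vx x, vx y} \<in> red G \<longleftrightarrow> RED x y"
proof -
  have sub: "{vx x, vx y} \<subseteq> F" using vx_F assms by blast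
  have "{vx x, vx y} \<in> red G \<longleftrightarrow> {vx x, vx y} \<in> {e \<in> red G. e \<subseteq> F}" using sub by blast
  also have "\<dots> \<longleftrightarrow> {vx x, vx y} \<in> (\<lambda>(x,y). {vx x, vx y}) ` RP" unfolding redF fence_red_eq ..
  also have "\<dots> \<longleftrightarrow> RED x y" unfolding RED_def by (rule mem_pairs_image[OF cf assms RP_sub])
  finally show ?thesis .
qed

lemma adj_iff: "x \<in> set IL \<Longrightarrow> y \<in> set IL \<Longrightarrow> {vx x, vx y} \<in> blk G \<union> red G \<longleftrightarrow> ADJ x y"
  using blk_iff red_iff unfolding ADJ_def by blast

lemma Sblk: "k \<in> set IL \<Longrightarrow> fst k \<Longrightarrow> s \<in> S \<Longrightarrow> {s, vx k} \<in> blk G"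
  using S_blk snd_IL[of k] by (simp add: vtx_def insert_commute)

lemma Snon: "k \<in> set IL \<Longrightarrow> \<not> fst k \<Longrightarrow> s \<in> S \<Longrightarrow> {s, vx k} \<notin> blk G \<union> red G"
  using S_nadj snd_IL[of k] by (simp add: vtx_def insert_commute adj_def)

lemma Xblk: "k \<in> set IL \<Longrightarrow> x \<in> X \<Longrightarrow> {x, vx k} \<in> blk G"
proof -
  assume k: "k \<in> set IL" and x: "x \<in> X"
  have i: "snd k \<in> {1..6}" using snd_IL[OF k] .
  show ?thesis
  proof (cases "fst k")
    case True
    hence "{a (snd k), x} \<in> blk G" using A_nb i x by blast
    thus ?thesis using True by (simp add: vtx_def insert_commute)
  next
    case False
    hence "{b (snd k), x} \<in> blk G" using B_nb i x by blast
    thus ?thesis using False by (simp add: vtx_def insert_commute)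
  qed
qed

lemma Ynon: "k \<in> set IL \<Longrightarrow> y \<in> Y \<Longrightarrow> {y, vx k} \<notin> blk G \<union> red G"
proof -
  assume k: "k \<in> set IL" and y: "y \<in> Y"
  have i: "snd k \<in> {1..6}" using snd_IL[OF k] .
  have yV: "y \<in> verts G" "y \<notin> F" "y \<notin> X" "y \<notin> S" using y Ydef by blast+
  show ?thesis
  proof (cases "fst k")
    case True
    have "neighbours G (a (snd k)) - F = X \<union> S" using A_nb i by blast
    hence "\<not> adj G (a (snd k)) y" using yV unfolding neighbours_def by blast
    thus ?thesis using True by (simp add: vtx_def insert_commute adj_def)
  next
    case False
    have "neighbours G (b (snd k)) - F = X" using B_nb i by blast
    hence "\<not> adj G (b (snd k)) y" using yV unfolding neighbours_def by blast
    thus ?thesis using False by (simp add: vtx_def insert_commute adj_def)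
  qed
qed

definition ptype :: "'v set \<Rightarrow> bool" where
  "ptype P \<longleftrightarrow> P \<subseteq> S \<or> P \<subseteq> X \<or> P \<subseteq> Y \<or> (\<exists>f\<in>F. f \<in> P \<and> P - {f} \<subseteq> Y)"

lemma ptype_F: "ptype P \<Longrightarrow> f1 \<in> P \<Longrightarrow> f2 \<in> P \<Longrightarrow> f1 \<in> F \<Longrightarrow> f2 \<in> F \<Longrightarrow> f1 = f2"
  unfolding ptype_def using disj_FS disj_FX disj_Y by blast

lemma ptype_S: "ptype P \<Longrightarrow> s \<in> P \<Longrightarrow> s \<in> S \<Longrightarrow> P \<subseteq> S"
  unfolding ptype_def using disj_FS disj_SX disj_Y by blast

end

context fctx begin

lemma count:
  assumes g: "good G H" and w: "w \<in> verts H" and old: "\<forall>P\<in>verts H. P \<noteq> w \<longrightarrow> ptype P"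
    and K: "K \<subseteq> set IL" and Kw: "\<forall>k\<in>K. vx k \<notin> w"
    and Kwit: "\<forall>k\<in>K. \<exists>p\<in>w. \<exists>p'\<in>w. {p, vx k} \<in> blk G \<union> red G \<and> {p', vx k} \<notin> blk G"
    and E: "E \<subseteq> verts H" "w \<notin> E" "\<forall>P\<in>E. P \<inter> F = {}" "\<forall>P\<in>E. {w,P} \<in> red H" "finite E"
  shows "card K + card E \<le> red_deg H w"
proof -
  define pf where "pf k = part_of H (vx k)" for k
  have pfk: "pf k \<in> verts H" "vx k \<in> pf k" if "k \<in> K" for k
  proof -
    have "vx k \<in> verts G" using F_sub vx_F K that by blast
    thus "pf k \<in> verts H" "vx k \<in> pf k" using part_of[OF g] unfolding pf_def by blast+
  qed
  have pfw: "pf k \<noteq> w" if "k \<in> K" for k using pfk[OF that] Kw that by blast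
  have inj: "inj_on pf K"
  proof (rule inj_onI)
    fix k1 k2 assume k: "k1 \<in> K" "k2 \<in> K" and e: "pf k1 = pf k2"
    have "ptype (pf k1)" using old pfk[OF k(1)] pfw[OF k(1)] by blast
    moreover have "vx k1 \<in> pf k1" using pfk(2)[OF k(1)] .
    moreover have "vx k2 \<in> pf k1" using pfk(2)[OF k(2)] e by simp
    moreover have "vx k1 \<in> F" "vx k2 \<in> F" using vx_F K k by blast+
    ultimately have "vx k1 = vx k2" using ptype_F by blast
    thus "k1 = k2" using vx_eq K k by blast
  qed
  have disjE: "pf ` K \<inter> E = {}"
  proof -
    have "pf k \<notin> E" if "k \<in> K" for k
    proof
      assume "pf k \<in> E"
      hence "pf k \<inter> F = {}" using E(3) by blast
      thus False using pfk(2)[OF that] vx_F K that by blast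
    qed
    thus ?thesis by blast
  qed
  have finK: "finite K" using K finite_subset by blast
  have cN: "card (pf ` K \<union> E) = card K + card E"
    using card_Un_disjoint[OF finite_imageI[OF finK] E(5) disjE] card_image[OF inj] by simp
  have red: "\<forall>Q\<in>pf ` K \<union> E. {w,Q} \<in> red H"
  proof
    fix Q assume "Q \<in> pf ` K \<union> E"
    thus "{w,Q} \<in> red H"
    proof
      assume "Q \<in> pf ` K"
      then obtain k where k: "k \<in> K" "Q = pf k" by blast
      obtain p p' where pp: "p \<in> w" "p' \<in> w" "{p, vx k} \<in> blk G \<union> red G" "{p', vx k} \<notin> blk G"
        using Kwit k(1) by blast
      show ?thesis unfolding k(2)
        by (rule red_crit[OF g w pfk(1)[OF k(1)] pfw[OF k(1), symmetric] pp(1) pfk(2)[OF k(1)] pp(3) pp(2) pfk(2)[OF k(1)] pp(4)])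
    next
      assume "Q \<in> E" thus ?thesis using E(4) by blast
    qed
  qed
  have "pf ` K \<union> E \<subseteq> verts H" using pfk E(1) by blast
  from red_deg_ge[OF g finV this red] cN show ?thesis by simp
qed

lemma count0:
  assumes g: "good G H" and w: "w \<in> verts H" and old: "\<forall>P\<in>verts H. P \<noteq> w \<longrightarrow> ptype P"
    and K: "K \<subseteq> set IL" and Kw: "\<forall>k\<in>K. vx k \<notin> w"
    and Kwit: "\<forall>k\<in>K. \<exists>p\<in>w. \<exists>p'\<in>w. {p, vx k} \<in> blk G \<union> red G \<and> {p', vx k} \<notin> blk G"
  shows "card K \<le> red_deg H w"
  using count[OF g w old K Kw Kwit, of "{}"] by simp

lemma cardA: "card {k \<in> set IL. fst k} = 6" using card_IL[of fst] CA by simp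
lemma cardB: "card {k \<in> set IL. \<not> fst k} = 6" using card_IL[of "\<lambda>k. \<not> fst k"] CB by simp

lemma case_noF:
  assumes g: "good G H" and w: "w \<in> verts H" and old: "\<forall>P\<in>verts H. P \<noteq> w \<longrightarrow> ptype P"
    and wF: "w \<inter> F = {}"
    and c: "(\<exists>s x. s \<in> w \<and> s \<in> S \<and> x \<in> w \<and> x \<in> X) \<or> (\<exists>s y. s \<in> w \<and> s \<in> S \<and> y \<in> w \<and> y \<in> Y)
            \<or> (\<exists>x y. x \<in> w \<and> x \<in> X \<and> y \<in> w \<and> y \<in> Y)"
  shows "6 \<le> red_deg H w"
proof -
  have Kw: "\<forall>k\<in>K. vx k \<notin> w" if "K \<subseteq> set IL" for K using that vx_F wF by blast
  from c show ?thesis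
  proof (elim disjE exE conjE)
    fix s x assume sx: "s \<in> w" "s \<in> S" "x \<in> w" "x \<in> X"
    let ?K = "{k \<in> set IL. \<not> fst k}"
    have "\<forall>k\<in>?K. \<exists>p\<in>w. \<exists>p'\<in>w. {p, vx k} \<in> blk G \<union> red G \<and> {p', vx k} \<notin> blk G"
      using sx Xblk Snon by blast
    from count0[OF g w old _ Kw[of ?K] this] cardB show ?thesis by simp
  next
    fix s y assume sy: "s \<in> w" "s \<in> S" "y \<in> w" "y \<in> Y"
    let ?K = "{k \<in> set IL. fst k}"
    have "\<forall>k\<in>?K. \<exists>p\<in>w. \<exists>p'\<in>w. {p, vx k} \<in> blk G \<union> red G \<and> {p', vx k} \<notin> blk G"
      using sy Sblk Ynon by blast
    from count0[OF g w old _ Kw[of ?K] this] cardA show ?thesis by simp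
  next
    fix x y assume xy: "x \<in> w" "x \<in> X" "y \<in> w" "y \<in> Y"
    let ?K = "{k \<in> set IL. \<not> fst k}"
    have "\<forall>k\<in>?K. \<exists>p\<in>w. \<exists>p'\<in>w. {p, vx k} \<in> blk G \<union> red G \<and> {p', vx k} \<notin> blk G"
      using xy Xblk Ynon by blast
    from count0[OF g w old _ Kw[of ?K] this] cardB show ?thesis by simp
  qed
qed

end

context fctx begin

lemma case_SF:
  assumes g: "good G H" and w: "w \<in> verts H" and old: "\<forall>P\<in>verts H. P \<noteq> w \<longrightarrow> ptype P"
    and s: "s \<in> w" "s \<in> S" and j: "j \<in> set IL" "vx j \<in> w" and wF: "w \<inter> F = {vx j}"
  shows "5 \<le> red_deg H w"
proof -
  define P where "P k \<longleftrightarrow> k\<noteq>j \<and> (fst k \<or> ADJ j k) \<and> (\<not>fst k \<or> \<not> BLK j k)" for k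
  let ?K = "{k \<in> set IL. P k}"
  have c: "5 \<le> card ?K" using C4 j(1) card_IL[of P] unfolding P_def by simp
  have Kw: "\<forall>k\<in>?K. vx k \<notin> w"
  proof
    fix k assume k: "k \<in> ?K"
    hence "vx k \<noteq> vx j" using vx_eq[of k j] j(1) unfolding P_def by blast
    moreover have "vx k \<in> F" using vx_F k by blast
    ultimately show "vx k \<notin> w" using wF by blast
  qed
  have wit: "\<forall>k\<in>?K. \<exists>p\<in>w. \<exists>p'\<in>w. {p, vx k} \<in> blk G \<union> red G \<and> {p', vx k} \<notin> blk G"
  proof
    fix k assume k: "k \<in> ?K"
    hence kI: "k \<in> set IL" and Pk: "P k" by blast+
    show "\<exists>p\<in>w. \<exists>p'\<in>w. {p, vx k} \<in> blk G \<union> red G \<and> {p', vx k} \<notin> blk G"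
    proof (cases "fst k")
      case True
      hence "\<not> BLK j k" using Pk unfolding P_def by blast
      hence "{vx j, vx k} \<notin> blk G" using blk_iff[OF j(1) kI] by blast
      moreover have "{s, vx k} \<in> blk G" using Sblk[OF kI True s(2)] .
      ultimately show ?thesis using s(1) j(2) by blast
    next
      case False
      hence "ADJ j k" using Pk unfolding P_def by blast
      hence "{vx j, vx k} \<in> blk G \<union> red G" using adj_iff[OF j(1) kI] by blast
      moreover have "{s, vx k} \<notin> blk G" using Snon[OF kI False s(2)] by blast
      ultimately show ?thesis using s(1) j(2) by blast
    qed
  qed
  from count0[OF g w old _ Kw wit] c show ?thesis by simp
qed

lemma case_XF:
  assumes g: "good G H" and w: "w \<in> verts H" and old: "\<forall>P\<in>verts H. P \<noteq> w \<longrightarrow> ptype P"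
    and x: "x \<in> w" "x \<in> X" and j: "j \<in> set IL" "vx j \<in> w" and wF: "w \<inter> F = {vx j}"
  shows "5 \<le> red_deg H w"
proof -
  define P where "P k \<longleftrightarrow> k\<noteq>j \<and> \<not> BLK j k" for k
  let ?K = "{k \<in> set IL. P k}"
  have c: "5 \<le> card ?K" using C5 j(1) card_IL[of P] unfolding P_def by simp
  have Kw: "\<forall>k\<in>?K. vx k \<notin> w"
  proof
    fix k assume k: "k \<in> ?K"
    hence "vx k \<noteq> vx j" using vx_eq[of k j] j(1) unfolding P_def by blast
    moreover have "vx k \<in> F" using vx_F k by blast
    ultimately show "vx k \<notin> w" using wF by blast
  qed
  have wit: "\<forall>k\<in>?K. \<exists>p\<in>w. \<exists>p'\<in>w. {p, vx k} \<in> blk G \<union> red G \<and> {p', vx k} \<notin> blk G"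
  proof
    fix k assume k: "k \<in> ?K"
    hence kI: "k \<in> set IL" and Pk: "P k" by blast+
    have "{vx j, vx k} \<notin> blk G" using blk_iff[OF j(1) kI] Pk unfolding P_def by blast
    moreover have "{x, vx k} \<in> blk G" using Xblk[OF kI x(2)] .
    ultimately show "\<exists>p\<in>w. \<exists>p'\<in>w. {p, vx k} \<in> blk G \<union> red G \<and> {p', vx k} \<notin> blk G"
      using x(1) j(2) by blast
  qed
  from count0[OF g w old _ Kw wit] c show ?thesis by simp
qed

lemma case_FF:
  assumes g: "good G H" and w: "w \<in> verts H" and old: "\<forall>P\<in>verts H. P \<noteq> w \<longrightarrow> ptype P"
    and j: "j1 \<in> set IL" "j2 \<in> set IL" "j1 \<noteq> j2" "vx j1 \<in> w" "vx j2 \<in> w" and wF: "w \<inter> F = {vx j1, vx j2}"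
    and E: "E \<subseteq> verts H" "w \<notin> E" "\<forall>P\<in>E. P \<inter> F = {}" "\<forall>P\<in>E. {w,P} \<in> red H" "finite E"
    and cE: "card E = (if fst j1 \<noteq> fst j2 then 2 else 0)"
  shows "5 \<le> red_deg H w"
proof -
  define P where "P k \<longleftrightarrow> k\<noteq>j1 \<and> k\<noteq>j2 \<and> (ADJ j1 k \<or> ADJ j2 k) \<and> (\<not>BLK j1 k \<or> \<not> BLK j2 k)" for k
  let ?K = "{k \<in> set IL. P k}"
  have c: "5 \<le> card ?K + card E" using C6 j(1,2,3) card_IL[of P] cE unfolding P_def by simp
  have Kw: "\<forall>k\<in>?K. vx k \<notin> w"
  proof
    fix k assume k: "k \<in> ?K"
    hence "vx k \<noteq> vx j1" "vx k \<noteq> vx j2" using vx_eq[of k j1] vx_eq[of k j2] j(1,2) unfolding P_def by blast+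
    moreover have "vx k \<in> F" using vx_F k by blast
    ultimately show "vx k \<notin> w" using wF by blast
  qed
  have wit: "\<forall>k\<in>?K. \<exists>p\<in>w. \<exists>p'\<in>w. {p, vx k} \<in> blk G \<union> red G \<and> {p', vx k} \<notin> blk G"
  proof
    fix k assume k: "k \<in> ?K"
    hence kI: "k \<in> set IL" and Pk: "P k" by blast+
    have "\<exists>p\<in>w. {p, vx k} \<in> blk G \<union> red G"
      using Pk adj_iff[OF j(1) kI] adj_iff[OF j(2) kI] j(4,5) unfolding P_def by blast
    moreover have "\<exists>p'\<in>w. {p', vx k} \<notin> blk G"
      using Pk blk_iff[OF j(1) kI] blk_iff[OF j(2) kI] j(4,5) unfolding P_def by blast
    ultimately show "\<exists>p\<in>w. \<exists>p'\<in>w. {p, vx k} \<in> blk G \<union> red G \<and> {p', vx k} \<notin> blk G" by blast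
  qed
  from count[OF g w old _ Kw wit E] c show ?thesis by simp
qed

end

context fctx begin

lemma Fpart:
  assumes "ptype u" "f \<in> u" "f \<in> F" shows "u - {f} \<subseteq> Y"
proof -
  have "f \<notin> S" "f \<notin> X" "f \<notin> Y" using assms(3) disj_FS disj_FX disj_Y by blast+
  hence "\<exists>f'\<in>F. f' \<in> u \<and> u - {f'} \<subseteq> Y" using assms(1,2) unfolding ptype_def by blast
  then obtain f' where f': "f' \<in> F" "f' \<in> u" "u - {f'} \<subseteq> Y" by blast
  have "f' = f" using ptype_F[OF assms(1) f'(2) assms(2) f'(1) assms(3)] .
  thus ?thesis using f'(3) by simp
qed

lemma oneF:
  assumes g: "good G H" and w: "w \<in> verts H" and wuv: "w = u \<union> v"
    and tu: "ptype u" and tv: "ptype v" and f: "f \<in> u" "f \<in> F" and vF: "v \<inter> F = {}"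
    and old: "\<forall>P\<in>verts H. P \<noteq> w \<longrightarrow> ptype P" and nt: "\<not> ptype w"
  shows "5 \<le> red_deg H w"
proof -
  have uY: "u - {f} \<subseteq> Y" by (rule Fpart[OF tu f])
  have wF: "w \<inter> F = {f}" using uY vF f disj_Y wuv by blast
  obtain j where j: "j \<in> set IL" "f = vx j" using F_vx[OF f(2)] by blast
  have "\<not> (w - {f} \<subseteq> Y)"
  proof
    assume "w - {f} \<subseteq> Y"
    hence "ptype w" unfolding ptype_def using f wuv by blast
    thus False using nt by blast
  qed
  then obtain z where z: "z \<in> w" "z \<noteq> f" "z \<notin> Y" by blast
  hence zv: "z \<in> v" using uY wuv by blast
  have vtypes: "v \<subseteq> S \<or> v \<subseteq> X \<or> v \<subseteq> Y"
    using tv vF unfolding ptype_def by blast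
  show ?thesis
  proof (cases "v \<subseteq> S")
    case True
    have "z \<in> S" using zv True by blast
    moreover have "vx j \<in> w" "w \<inter> F = {vx j}" using j f wuv wF by auto
    ultimately show ?thesis using case_SF[OF g w old z(1) _ j(1)] by blast
  next
    case False
    show ?thesis
    proof (cases "v \<subseteq> X")
      case True
      have "z \<in> X" using zv True by blast
      moreover have "vx j \<in> w" "w \<inter> F = {vx j}" using j f wuv wF by auto
      ultimately show ?thesis using case_XF[OF g w old z(1) _ j(1)] by blast
    next
      case False
      hence "v \<subseteq> Y" using vtypes \<open>\<not> v \<subseteq> S\<close> by blast
      thus ?thesis using zv z by blast
    qed
  qed
qed

lemma twoF:
  assumes g: "good G H" and w: "w \<in> verts H" and wuv: "w = u \<union> v" and uv: "u \<inter> v = {}"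
    and tu: "ptype u" and tv: "ptype v" and f1: "f1 \<in> u" "f1 \<in> F" and f2: "f2 \<in> v" "f2 \<in> F"
    and old: "\<forall>P\<in>verts H. P \<noteq> w \<longrightarrow> ptype P" and nS: "\<not> (\<exists>P\<in>verts H. S \<subseteq> P)"
  shows "5 \<le> red_deg H w"
proof -
  have uY: "u - {f1} \<subseteq> Y" by (rule Fpart[OF tu f1])
  have vY: "v - {f2} \<subseteq> Y" by (rule Fpart[OF tv f2])
  have ne: "f1 \<noteq> f2" using f1 f2 uv by blast
  have wF: "w \<inter> F = {f1, f2}" using uY vY f1 f2 disj_Y wuv by blast
  have wS: "w \<inter> S = {}" using uY vY f1 f2 disj_Y disj_FS wuv by blast
  obtain j1 where j1: "j1 \<in> set IL" "f1 = vx j1" using F_vx[OF f1(2)] by blast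
  obtain j2 where j2: "j2 \<in> set IL" "f2 = vx j2" using F_vx[OF f2(2)] by blast
  have jne: "j1 \<noteq> j2" using ne j1 j2 by blast
  have wV: "w \<subseteq> verts G" using goodD1[OF g] w by blast
  show ?thesis
  proof (cases "fst j1 \<noteq> fst j2")
    case False
    show ?thesis
      by (rule case_FF[OF g w old j1(1) j2(1) jne _ _ _, of "{}"]) (use j1 j2 f1 f2 wuv wF False in auto)
  next
    case True
    obtain s1 where s1: "s1 \<in> S" using S_ne by blast
    have "s1 \<in> verts G" using s1 S_sub by blast
    then obtain P1 where P1: "P1 \<in> verts H" "s1 \<in> P1" using goodD3[OF g] by blast
    have "\<not> S \<subseteq> P1" using nS P1 by blast
    then obtain s2 where s2: "s2 \<in> S" "s2 \<notin> P1" by blast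
    have "s2 \<in> verts G" using s2 S_sub by blast
    then obtain P2 where P2: "P2 \<in> verts H" "s2 \<in> P2" using goodD3[OF g] by blast
    have P12: "P1 \<noteq> P2" using P1 P2 s2 by blast
    have Pw: "P1 \<noteq> w" "P2 \<noteq> w" using P1 P2 s1 s2 wS by blast+
    have PS: "P1 \<subseteq> S" "P2 \<subseteq> S" using ptype_S old P1 P2 Pw s1 s2 by blast+
    have PF: "P1 \<inter> F = {}" "P2 \<inter> F = {}" using PS disj_FS by blast+
    obtain jA jB where jAB: "jA \<in> set IL" "jB \<in> set IL" "fst jA" "\<not> fst jB" "vx jA \<in> w" "vx jB \<in> w"
    proof (cases "fst j1")
      case True
      thus thesis using that[of j1 j2] \<open>fst j1 \<noteq> fst j2\<close> j1 j2 f1 f2 wuv by auto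
    next
      case False
      thus thesis using that[of j2 j1] \<open>fst j1 \<noteq> fst j2\<close> j1 j2 f1 f2 wuv by auto
    qed
    have redP: "{w, P} \<in> red H" if P: "P \<in> verts H" "P \<noteq> w" "s \<in> P" "s \<in> S" for P s
    proof (rule red_crit[OF g w P(1) P(2)[symmetric]])
      show "vx jA \<in> w" "s \<in> P" "vx jB \<in> w" "s \<in> P" using jAB P by auto
      show "{vx jA, s} \<in> blk G \<union> red G" using Sblk[OF jAB(1) jAB(3) P(4)] by (simp add: insert_commute)
      show "{vx jB, s} \<notin> blk G" using Snon[OF jAB(2) jAB(4) P(4)] by (simp add: insert_commute)
    qed
    have E: "{P1,P2} \<subseteq> verts H" "w \<notin> {P1,P2}" "\<forall>P\<in>{P1,P2}. P \<inter> F = {}"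
      "\<forall>P\<in>{P1,P2}. {w,P} \<in> red H" "finite {P1,P2}"
      using P1 P2 Pw PF redP[OF P1(1) Pw(1) P1(2) s1] redP[OF P2(1) Pw(2) P2(2) s2(1)] by auto
    have cE: "card {P1,P2} = (if fst j1 \<noteq> fst j2 then 2 else 0)" using P12 True by simp
    show ?thesis
      by (rule case_FF[OF g w old j1(1) j2(1) jne _ _ _ E cE]) (use j1 j2 f1 f2 wuv wF in auto)
  qed
qed

lemma step:
  assumes g: "good G H" and w: "w \<in> verts H" and wuv: "w = u \<union> v" and uv: "u \<inter> v = {}"
    and tu: "ptype u" and tv: "ptype v" and old: "\<forall>P\<in>verts H. P \<noteq> w \<longrightarrow> ptype P"
    and nS: "\<not> (\<exists>P\<in>verts H. S \<subseteq> P)" and deg: "red_deg H w \<le> 4"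
  shows "ptype w"
proof (rule ccontr)
  assume nt: "\<not> ptype w"
  have wV: "w \<subseteq> verts G" using goodD1[OF g] w by blast
  show False
  proof (cases "w \<inter> F = {}")
    case True
    have tu': "u \<subseteq> S \<or> u \<subseteq> X \<or> u \<subseteq> Y" using tu True wuv unfolding ptype_def by blast
    have tv': "v \<subseteq> S \<or> v \<subseteq> X \<or> v \<subseteq> Y" using tv True wuv unfolding ptype_def by blast
    have nw: "\<not> w \<subseteq> S" "\<not> w \<subseteq> X" "\<not> w \<subseteq> Y" using nt unfolding ptype_def by blast+
    have c: "(\<exists>s x. s \<in> w \<and> s \<in> S \<and> x \<in> w \<and> x \<in> X) \<or> (\<exists>s y. s \<in> w \<and> s \<in> S \<and> y \<in> w \<and> y \<in> Y)
            \<or> (\<exists>x y. x \<in> w \<and> x \<in> X \<and> y \<in> w \<and> y \<in> Y)"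
    proof -
      have wsub: "w \<subseteq> S \<union> X \<union> Y" using tu' tv' wuv by blast
      show ?thesis
      proof (cases "w \<inter> S = {}")
        case True
        obtain x where "x \<in> w" "x \<notin> Y" using nw(3) by blast
        hence x: "x \<in> w" "x \<in> X" using wsub True by blast+
        obtain y where "y \<in> w" "y \<notin> X" using nw(2) by blast
        hence y: "y \<in> w" "y \<in> Y" using wsub True by blast+
        show ?thesis using x y by blast
      next
        case False
        then obtain s where s: "s \<in> w" "s \<in> S" by blast
        obtain z where "z \<in> w" "z \<notin> S" using nw(1) by blast
        hence "z \<in> w" "z \<in> X \<or> z \<in> Y" using wsub by blast+
        thus ?thesis using s by blast
      qed
    qed
    have "6 \<le> red_deg H w" by (rule case_noF[OF g w old True c])
    thus False using deg by simp
  next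
    case False
    then obtain f where f: "f \<in> w" "f \<in> F" by blast
    have "5 \<le> red_deg H w"
    proof (cases "u \<inter> F = {}")
      case True
      hence fv: "f \<in> v" using f wuv by blast
      have w': "w = v \<union> u" using wuv by blast
      show ?thesis by (rule oneF[OF g w w' tv tu fv f(2) True old nt])
    next
      case False
      then obtain f1 where f1: "f1 \<in> u" "f1 \<in> F" by blast
      show ?thesis
      proof (cases "v \<inter> F = {}")
        case True
        show ?thesis by (rule oneF[OF g w wuv tu tv f1 True old nt])
      next
        case False
        then obtain f2 where f2: "f2 \<in> v" "f2 \<in> F" by blast
        show ?thesis by (rule twoF[OF g w wuv uv tu tv f1 f2 old nS])
      qed
    qed
    thus False using deg by simp
  qed
qed

end

lemma verts_contract: "verts (contract H u v) = (verts H - {u,v}) \<union> {u \<union> v}"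
  by (simp add: contract_def Let_def)

context fctx begin

lemma ptype_single: "x \<in> verts G \<Longrightarrow> ptype {x}"
  unfolding ptype_def using V_cover by blast

lemma ptype_i: "ptype P \<Longrightarrow> \<not> (P \<inter> S \<noteq> {} \<and> P \<inter> (verts G - S) \<noteq> {})"
  unfolding ptype_def using disj_FS disj_SX disj_Y by blast

lemma ptype_ii: "ptype P \<Longrightarrow> \<not> (P \<inter> X \<noteq> {} \<and> P \<inter> Y \<noteq> {})"
  unfolding ptype_def using disj_FX disj_SX disj_Y by blast

lemma seq_typed:
  assumes ps: "partial_seq 4 G Gs"
  shows "\<forall>i < length Gs. good G (Gs ! i) \<and> (\<not> (\<exists>P\<in>verts (Gs ! i). S \<subseteq> P) \<longrightarrow> (\<forall>P\<in>verts (Gs ! i). ptype P))"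
proof -
  have ne: "Gs \<noteq> []" using ps unfolding partial_seq_def by (elim conjE) assumption
  have hd: "hd Gs = lift G" using ps unfolding partial_seq_def by (elim conjE) assumption
  have stp: "\<forall>i. Suc i < length Gs \<longrightarrow>
          (\<exists>u \<in> verts (Gs ! i). \<exists>v \<in> verts (Gs ! i). u \<noteq> v
              \<and> Gs ! Suc i = contract (Gs ! i) u v)" using ps unfolding partial_seq_def by (elim conjE) assumption
  have dg: "\<forall>H \<in> set Gs. max_red_deg_le H 4" using ps unfolding partial_seq_def by (elim conjE) assumption
  show ?thesis
  proof (intro allI impI)
    fix i assume "i < length Gs"
    thus "good G (Gs ! i) \<and> (\<not> (\<exists>P\<in>verts (Gs ! i). S \<subseteq> P) \<longrightarrow> (\<forall>P\<in>verts (Gs ! i). ptype P))"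
    proof (induction i)
      case 0
      have "Gs ! 0 = lift G" using hd ne by (simp add: hd_conv_nth)
      moreover have "good G (lift G)" by (rule good_lift[OF wf])
      moreover have "\<forall>P\<in>verts (lift G). ptype P" using ptype_single by (auto simp: lift_def)
      ultimately show ?case by simp
    next
      case (Suc i)
      hence i: "i < length Gs" by simp
      note IH = Suc.IH[OF i]
      let ?H = "Gs ! i" and ?H' = "Gs ! Suc i"
      have "\<exists>u \<in> verts ?H. \<exists>v \<in> verts ?H. u \<noteq> v \<and> ?H' = contract ?H u v"
        using stp Suc.prems by simp
      then obtain u v where uv: "u \<in> verts ?H" "v \<in> verts ?H" "u \<noteq> v" "?H' = contract ?H u v"
        by (elim bexE conjE) simp
      have gH: "good G ?H" using IH by blast
      have gH': "good G ?H'" using good_contract[OF gH uv(1-3)] uv(4) by simp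
      have vH': "verts ?H' = (verts ?H - {u,v}) \<union> {u \<union> v}" using uv(4) verts_contract by simp
      have typed: "\<forall>P\<in>verts ?H'. ptype P" if nS': "\<not> (\<exists>P\<in>verts ?H'. S \<subseteq> P)"
      proof -
        have nS: "\<not> (\<exists>P\<in>verts ?H. S \<subseteq> P)"
        proof
          assume "\<exists>P\<in>verts ?H. S \<subseteq> P"
          then obtain P where P: "P \<in> verts ?H" "S \<subseteq> P" by blast
          show False
          proof (cases "P = u \<or> P = v")
            case True
            hence "S \<subseteq> u \<union> v" using P by blast
            moreover have "u \<union> v \<in> verts ?H'" unfolding vH' by simp
            ultimately show False using nS' by blast
          next
            case False
            hence "P \<in> verts ?H'" unfolding vH' using P by simp
            thus False using nS' P by blast
          qed
        qed
        have IH2: "\<not> (\<exists>P\<in>verts ?H. S \<subseteq> P) \<longrightarrow> (\<forall>P\<in>verts ?H. ptype P)" using IH by (rule conjunct2)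
        have tH: "\<forall>P\<in>verts ?H. ptype P" using IH2 nS by (rule mp)
        have w: "u \<union> v \<in> verts ?H'" unfolding vH' by simp
        have old: "\<forall>P\<in>verts ?H'. P \<noteq> u \<union> v \<longrightarrow> ptype P"
        proof (intro ballI impI)
          fix P assume "P \<in> verts ?H'" "P \<noteq> u \<union> v"
          hence "P \<in> verts ?H" unfolding vH' by simp
          thus "ptype P" using tH by (rule bspec[rotated])
        qed
        have uvd: "u \<inter> v = {}" using goodD2[OF gH] uv(1-3) by blast
        have "?H' \<in> set Gs" using Suc.prems by simp
        hence "max_red_deg_le ?H' 4" using dg by (rule bspec[rotated])
        hence "\<forall>x\<in>verts ?H'. red_deg ?H' x \<le> 4" unfolding max_red_deg_le_def .
        hence deg: "red_deg ?H' (u \<union> v) \<le> 4" using w by (rule bspec)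
        have tu: "ptype u" using tH uv(1) by (rule bspec)
        have tv: "ptype v" using tH uv(2) by (rule bspec)
        have pw: "ptype (u \<union> v)" by (rule step[OF gH' w refl uvd tu tv old nS' deg])
        show ?thesis
        proof
          fix P assume P: "P \<in> verts ?H'"
          show "ptype P"
          proof (cases "P = u \<union> v")
            case True thus ?thesis using pw by simp
          next
            case False thus ?thesis using old P by simp
          qed
        qed
      qed
      show ?case
      proof (rule conjI)
        show "good G ?H'" by (rule gH')
        show "\<not> (\<exists>P\<in>verts ?H'. S \<subseteq> P) \<longrightarrow> (\<forall>P\<in>verts ?H'. ptype P)" using typed by (rule impI)
      qed
    qed
  qed
qed

end

theorem lemma4p9:
  fixes G :: "'v trigraph" and a b :: "nat \<Rightarrow> 'v" and S X Y :: "'v set"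
    and Gs :: "'v set trigraph list" and G' :: "'v set trigraph"
  assumes "wf_trigraph G"
    and "contains_fence G a b"
    and "attached G a b S"
    and "attachment_rule G a b S X"
    and "Y = verts G - (fence_vs a b \<union> S \<union> X)"
    and "partial_seq 4 G Gs"
    and "G' \<in> set Gs"
    and "\<not> (\<exists>P \<in> verts G'. S \<subseteq> P)"
  shows "(\<forall>P \<in> verts G'. \<not> (P \<inter> S \<noteq> {} \<and> P \<inter> (verts G - S) \<noteq> {}))
       \<and> (\<forall>P \<in> verts G'. \<not> (P \<inter> X \<noteq> {} \<and> P \<inter> Y \<noteq> {}))"
proof -
  interpret fctx G a b S X Y using assms(1-5) by unfold_locales
  obtain i where i: "i < length Gs" "G' = Gs ! i" using assms(7) by (auto simp: in_set_conv_nth)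
  have "\<forall>P\<in>verts G'. ptype P" using seq_typed[OF assms(6)] i assms(8) by blast
  thus ?thesis using ptype_i ptype_ii by blast
qed

end
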